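(* Let $(X,d)$ be a complete metric space, let $T:X\to P(X)$ be a multivalued operator with $SFix(T)=\{x^*\}$, and let $T_G(x)=\{G(x,u):u\in T(x)\}$ be an admissible perturbation of $T$ corresponding to a mapping $G:X\times X\to X$ satisfying $G(x,x)=x$ for all $x$ and ($G(x,y)=x\Rightarrow y=x$). Let $F:X\to P(X)$ be a multivalued operator with $SFix(F)\neq\emptyset$. Suppose: 1) $T_G$ is a $\Psi$-MP operator with $SFix(T_G)=\{x^*\}$; 2) there is $c>0$ with $D(x,T_G(x))\le c\,D(x,T(x))$ for all $x\in X$; 3) there is $\eta>0$ with $H(T(x),F(x))\le\eta$ for all $x\in X$. Then (i) $d(x,x^* )\le\Psi(c\,D(x,T(x)))$ for all $x\in X$, and (ii) $d(x^*,y^* )\le\Psi(c\eta)$ for all $y^*\in SFix(F)$.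
   Context: $P(X)$ is the family of nonempty subsets of $X$; $Fix(S)=\{x:x\in S(x)\}$, $SFix(S)=\{x:S(x)=\{x\}\}$. For nonempty $A,B\subseteq X$: $D(a,B)=\inf_{b\in B}d(a,b)$, $e(A,B)=\sup_{a\in A}D(a,B)$, $H(A,B)=\max\{e(A,B),e(B,A)\}$. A multivalued operator $S:X\to P(X)$ is a multivalued Picard operator if $SFix(S)=Fix(S)=\{x^*\}$ and $H(S^n(x),\{x^*\})\to0$ for each $x\in X$ (with $S^0(x)=\{x\}$, $S^n(x)=\bigcup_{y\in S^{n-1}(x)}S(y)$). Given an increasing function $\Psi:\mathbb R_+\to\mathbb R_+$, continuous at $0$ with $\Psi(0)=0$, $S$ is a $\Psi$-MP operator if it is a multivalued Picard operator with unique strict fixed point $x^*$ and $d(x,x^* )\le\Psi(D(x,S(x)))$ for all $x\in X$. *)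

theory Defs
  imports "HOL-Analysis.Analysis"
begin

definition mv_operator :: "('a \<Rightarrow> 'a set) \<Rightarrow> bool" where
  "mv_operator S \<longleftrightarrow> (\<forall>x. S x \<noteq> {})"

definition Fix :: "('a \<Rightarrow> 'a set) \<Rightarrow> 'a set" where
  "Fix S = {x. x \<in> S x}"

definition SFix :: "('a \<Rightarrow> 'a set) \<Rightarrow> 'a set" where
  "SFix S = {x. S x = {x}}"

text \<open>D(a,B) is the library's infdist. Excess and Hausdorff-Pompeiu distance,
  valued in the extended reals (they may be infinite).\<close>

definition excess :: "'a::metric_space set \<Rightarrow> 'a set \<Rightarrow> ereal" where
  "excess A B = (SUP a\<in>A. ereal (infdist a B))"

definition Hdist :: "'a::metric_space set \<Rightarrow> 'a set \<Rightarrow> ereal" where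
  "Hdist A B = max (excess A B) (excess B A)"

fun mv_iter :: "('a \<Rightarrow> 'a set) \<Rightarrow> nat \<Rightarrow> 'a \<Rightarrow> 'a set" where
  "mv_iter S 0 x = {x}"
| "mv_iter S (Suc n) x = (\<Union>y\<in>mv_iter S n x. S y)"

definition mv_picard :: "('a::metric_space \<Rightarrow> 'a set) \<Rightarrow> 'a \<Rightarrow> bool" where
  "mv_picard S xs \<longleftrightarrow> SFix S = {xs} \<and> Fix S = {xs} \<and>
     (\<forall>x. ((\<lambda>n. Hdist (mv_iter S n x) {xs}) \<longlongrightarrow> 0) sequentially)"

definition psi_function :: "(real \<Rightarrow> real) \<Rightarrow> bool" where
  "psi_function \<Psi> \<longleftrightarrow> mono_on {0..} \<Psi> \<and> (\<forall>t\<ge>0. \<Psi> t \<ge> 0) \<and> \<Psi> 0 = 0 \<and>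
     continuous (at 0 within {0..}) \<Psi>"

definition psi_MP :: "(real \<Rightarrow> real) \<Rightarrow> ('a::metric_space \<Rightarrow> 'a set) \<Rightarrow> 'a \<Rightarrow> bool" where
  "psi_MP \<Psi> S xs \<longleftrightarrow> mv_picard S xs \<and> (\<forall>x. dist x xs \<le> \<Psi> (infdist x (S x)))"

definition perturb :: "('a \<Rightarrow> 'a set) \<Rightarrow> ('a \<Rightarrow> 'a \<Rightarrow> 'a) \<Rightarrow> 'a \<Rightarrow> 'a set" where
  "perturb T G x = (\<lambda>u. G x u) ` T x"

definition admissible_G :: "('a \<Rightarrow> 'a \<Rightarrow> 'a) \<Rightarrow> bool" where
  "admissible_G G \<longleftrightarrow> (\<forall>x. G x x = x) \<and> (\<forall>x y. G x y = x \<longrightarrow> y = x)"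

end

theory Submission
  imports Defs
begin

theorem mainTheorem4:
  fixes T F :: "'a::complete_space \<Rightarrow> 'a set"
    and G :: "'a \<Rightarrow> 'a \<Rightarrow> 'a"
    and \<Psi> :: "real \<Rightarrow> real"
    and xs :: 'a and c \<eta> :: real
  assumes "mv_operator T" and "SFix T = {xs}"
    and "admissible_G G"
    and "mv_operator F" and "SFix F \<noteq> {}"
    and "psi_function \<Psi>"
    and "psi_MP \<Psi> (perturb T G) xs" and "SFix (perturb T G) = {xs}"
    and "c > 0" and "\<forall>x. infdist x (perturb T G x) \<le> c * infdist x (T x)"
    and "\<eta> > 0" and "\<forall>x. Hdist (T x) (F x) \<le> ereal \<eta>"
  shows "(\<forall>x. dist x xs \<le> \<Psi> (c * infdist x (T x))) \<and>
         (\<forall>ys\<in>SFix F. dist xs ys \<le> \<Psi> (c * \<eta>))"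
proof -
  have mono: "mono_on {0..} \<Psi>" using assms(6) unfolding psi_function_def by blast
  have i: "dist x xs \<le> \<Psi> (c * infdist x (T x))" for x
  proof -
    have "dist x xs \<le> \<Psi> (infdist x (perturb T G x))"
      using assms(7) unfolding psi_MP_def by blast
    also have "\<dots> \<le> \<Psi> (c * infdist x (T x))"
    proof (rule mono_onD[OF mono])
      show "infdist x (perturb T G x) \<in> {0..}" by (simp add: infdist_nonneg)
      show "c * infdist x (T x) \<in> {0..}" using assms(9) by (simp add: infdist_nonneg)
      show "infdist x (perturb T G x) \<le> c * infdist x (T x)" using assms(10) by blast
    qed
    finally show ?thesis .
  qed
  moreover have "dist xs ys \<le> \<Psi> (c * \<eta>)" if ys: "ys \<in> SFix F" for ys
  proof -
    have Fy: "F ys = {ys}" using ys unfolding SFix_def by blast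
    have "ereal (infdist ys (T ys)) = excess (F ys) (T ys)"
      unfolding Fy excess_def by simp
    also have "\<dots> \<le> Hdist (T ys) (F ys)" unfolding Hdist_def by simp
    also have "\<dots> \<le> ereal \<eta>" using assms(12) by blast
    finally have le: "infdist ys (T ys) \<le> \<eta>" by simp
    have "dist xs ys = dist ys xs" by (simp add: dist_commute)
    also have "\<dots> \<le> \<Psi> (c * infdist ys (T ys))" by (rule i)
    also have "\<dots> \<le> \<Psi> (c * \<eta>)"
    proof (rule mono_onD[OF mono])
      show "c * infdist ys (T ys) \<in> {0..}" using assms(9) by (simp add: infdist_nonneg)
      show "c * \<eta> \<in> {0..}" using assms(9,11) by simp
      show "c * infdist ys (T ys) \<le> c * \<eta>" using assms(9) le by simp
    qed
    finally show ?thesis .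
  qed
  ultimately show ?thesis by blast
qed

end
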